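(* Consider the setting of the world-model-learning problem: $p_1,\dots,p_d\in(0,1)$ with $\sum_kp_k=1$; tasks $h_i=h_i'\circ\psi^{-1}$ sampled independently by drawing $k$ with $\Pr[k=i]=p_i$ and then $h_i'$ uniformly from $\mathcal{F}^d_k$; representations $\Phi$ range over maps $\{-1,1\}^m\to\mathcal{Z}$ with $\Phi\circ\psi$ a bijection of $\mathcal{Z}$, and $g_i$ is the unique function with $g_i\circ\Phi\in\mathcal{H}(h_i)$. Now measure degrees in a new basis: let $U_d$ be a compatible basis transform of $\mathbb{R}^{\{-1,1\}^d}$ and $U_m$ a compatible basis transform of $\mathbb{R}^{\{-1,1\}^m}$, and replace the objective by $\frac1n\big(\sum_{i=1}^n\deg_{U_d}(g_i)+\sum_{j=1}^d\deg_{U_m}(\Phi_j)\big)$. Then, almost surely, as $n\to\infty$ this objective converges for every admissible $\Phi$, and every $\Phi^*$ minimizing the limit learns the world model up to negations and permutations: there exist a permutation $i_1,\dots,i_d$ of $[d]$ and signs $s_j\in\{-1,1\}$ with $\Phi^*_j(\psi(z))=s_jz_{i_j}$ for all $j\in[d]$, $z\in\mathcal{Z}$.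
   Context: Standing setup: $m\ge d\ge1$, $\mathcal{Z}=\{-1,1\}^d$, $\psi:\mathcal{Z}\to\{-1,1\}^m$ injective, $\mathcal{X}=\psi(\mathcal{Z})$. For $f:\{-1,1\}^n\to\mathbb{R}$, $f=\sum_{S\subseteq[n]}\hat f(S)\chi_S$, $\chi_S(x)=\prod_{i\in S}x_i$, $\deg(f)=\max\{|S|:\hat f(S)\ne 0\}$. $\mathcal{H}(h)$: functions on $\{-1,1\}^m$ agreeing with task $h$ on $\mathcal{X}$. Finite-precision convention: fix finite $V\subset\mathbb{R}$ with $\{-1,1\}\subseteq V$; $\mathcal{F}^d$ = all functions $\{-1,1\}^d\to V$, $\mathcal{F}^d_k=\{h\in\mathcal{F}^d:\deg h\le k\}$. $\mathbb{R}^{\{-1,1\}^n}$ denotes the real vector space of all functions $\{-1,1\}^n\to\mathbb{R}$. A basis transform is an invertible linear map $U$ on $\mathbb{R}^{\{-1,1\}^n}$ (so $\{U(\chi_S)\}_{S\subseteq[n]}$ is a basis); the degree of $f$ under $U$ is $\deg_U(f):=\max\{\deg(U^{-1}(\chi_S)):\hat f(S)\ne0\}$. $U$ is compatible if $\deg(U(\chi_S))=\deg(\chi_S)=|S|$ for every $S\subseteq[n]$. *)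

theory Defs
  imports "HOL-Probability.Probability"
begin

definition cube :: "nat \<Rightarrow> (nat \<Rightarrow> real) set" where
  "cube n = {x. (\<forall>i<n. x i \<in> {-1, 1}) \<and> (\<forall>i\<ge>n. x i = 0)}"

text \<open>The vector space R^{{-1,1}^n}, realised as functions vanishing off the cube.\<close>
definition fspace :: "nat \<Rightarrow> ((nat \<Rightarrow> real) \<Rightarrow> real) set" where
  "fspace n = {f. \<forall>x. x \<notin> cube n \<longrightarrow> f x = 0}"

definition chi :: "nat \<Rightarrow> nat set \<Rightarrow> (nat \<Rightarrow> real) \<Rightarrow> real" where
  "chi n S x = (if x \<in> cube n then (\<Prod>i\<in>S. x i) else 0)"

definition fourier :: "nat \<Rightarrow> ((nat \<Rightarrow> real) \<Rightarrow> real) \<Rightarrow> nat set \<Rightarrow> real" where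
  "fourier n f S = (\<Sum>x\<in>cube n. f x * (\<Prod>i\<in>S. x i)) / 2 ^ n"

text \<open>Degree; the zero function gets degree 0 (convention).\<close>
definition deg :: "nat \<Rightarrow> ((nat \<Rightarrow> real) \<Rightarrow> real) \<Rightarrow> nat" where
  "deg n f = Max (insert 0 {card S | S. S \<subseteq> {..<n} \<and> fourier n f S \<noteq> 0})"

definition basis_transform :: "nat \<Rightarrow> (((nat \<Rightarrow> real) \<Rightarrow> real) \<Rightarrow> ((nat \<Rightarrow> real) \<Rightarrow> real)) \<Rightarrow> bool" where
  "basis_transform n U \<longleftrightarrow>
     (\<forall>f\<in>fspace n. \<forall>g\<in>fspace n. U (\<lambda>x. f x + g x) = (\<lambda>x. U f x + U g x)) \<and>
     (\<forall>c. \<forall>f\<in>fspace n. U (\<lambda>x. c * f x) = (\<lambda>x. c * U f x)) \<and>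
     bij_betw U (fspace n) (fspace n)"

definition compatible :: "nat \<Rightarrow> (((nat \<Rightarrow> real) \<Rightarrow> real) \<Rightarrow> ((nat \<Rightarrow> real) \<Rightarrow> real)) \<Rightarrow> bool" where
  "compatible n U \<longleftrightarrow> (\<forall>S. S \<subseteq> {..<n} \<longrightarrow> deg n (U (chi n S)) = card S)"

definition deg_U :: "nat \<Rightarrow> (((nat \<Rightarrow> real) \<Rightarrow> real) \<Rightarrow> ((nat \<Rightarrow> real) \<Rightarrow> real))
                      \<Rightarrow> ((nat \<Rightarrow> real) \<Rightarrow> real) \<Rightarrow> nat" where
  "deg_U n U f = Max (insert 0 {deg n (inv_into (fspace n) U (chi n S)) | S.
                                 S \<subseteq> {..<n} \<and> fourier n f S \<noteq> 0})"

definition Fk :: "real set \<Rightarrow> nat \<Rightarrow> nat \<Rightarrow> ((nat \<Rightarrow> real) \<Rightarrow> real) set" where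
  "Fk V d k = {h \<in> fspace d. (\<forall>x\<in>cube d. h x \<in> V) \<and> deg d h \<le> k}"

definition task_pmf :: "real set \<Rightarrow> nat \<Rightarrow> nat pmf \<Rightarrow> ((nat \<Rightarrow> real) \<Rightarrow> real) pmf" where
  "task_pmf V d K = bind_pmf K (\<lambda>k. pmf_of_set (Fk V d k))"

definition admissible :: "nat \<Rightarrow> nat \<Rightarrow> ((nat \<Rightarrow> real) \<Rightarrow> (nat \<Rightarrow> real))
                           \<Rightarrow> ((nat \<Rightarrow> real) \<Rightarrow> (nat \<Rightarrow> real)) \<Rightarrow> bool" where
  "admissible d m \<psi> \<Phi> \<longleftrightarrow> \<Phi> ` cube m \<subseteq> cube d \<and> bij_betw (\<Phi> \<circ> \<psi>) (cube d) (cube d)"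

text \<open>g: the unique function on {-1,1}^d with g o Phi agreeing with h = h' o psi^{-1} on X.\<close>
definition g_of :: "nat \<Rightarrow> ((nat \<Rightarrow> real) \<Rightarrow> (nat \<Rightarrow> real)) \<Rightarrow> ((nat \<Rightarrow> real) \<Rightarrow> (nat \<Rightarrow> real))
                    \<Rightarrow> ((nat \<Rightarrow> real) \<Rightarrow> real) \<Rightarrow> ((nat \<Rightarrow> real) \<Rightarrow> real)" where
  "g_of d \<psi> \<Phi> h' = (THE g. g \<in> fspace d \<and> (\<forall>z\<in>cube d. g (\<Phi> (\<psi> z)) = h' z))"

definition coord :: "nat \<Rightarrow> ((nat \<Rightarrow> real) \<Rightarrow> (nat \<Rightarrow> real)) \<Rightarrow> nat \<Rightarrow> (nat \<Rightarrow> real) \<Rightarrow> real" where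
  "coord m \<Phi> j x = (if x \<in> cube m then \<Phi> x j else 0)"

definition objective :: "nat \<Rightarrow> nat \<Rightarrow> ((nat \<Rightarrow> real) \<Rightarrow> (nat \<Rightarrow> real))
     \<Rightarrow> (((nat \<Rightarrow> real) \<Rightarrow> real) \<Rightarrow> ((nat \<Rightarrow> real) \<Rightarrow> real))
     \<Rightarrow> (((nat \<Rightarrow> real) \<Rightarrow> real) \<Rightarrow> ((nat \<Rightarrow> real) \<Rightarrow> real))
     \<Rightarrow> (nat \<Rightarrow> ((nat \<Rightarrow> real) \<Rightarrow> real)) \<Rightarrow> ((nat \<Rightarrow> real) \<Rightarrow> (nat \<Rightarrow> real)) \<Rightarrow> nat \<Rightarrow> real" where
  "objective d m \<psi> Ud Um hs \<Phi> n =
     (1 / real n) * ((\<Sum>i<n. real (deg_U d Ud (g_of d \<psi> \<Phi> (hs i))))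
                    + (\<Sum>j<d. real (deg_U m Um (coord m \<Phi> j))))"

end

theory Submission
  imports Defs "HOL-Library.Function_Algebras"
begin


lemma cube_sub: "cube n \<subseteq> (\<lambda>g i. if i < n then g i else 0) ` (PiE {..<n} (\<lambda>_. {-1,1::real}))"
proof
  fix x assume x: "x \<in> cube n"
  have "restrict x {..<n} \<in> PiE {..<n} (\<lambda>_. {-1,1::real})" using x by (auto simp: cube_def)
  moreover have "x = (\<lambda>i. if i < n then restrict x {..<n} i else 0)"
    using x by (auto simp: cube_def fun_eq_iff)
  ultimately show "x \<in> (\<lambda>g i. if i < n then g i else 0) ` (PiE {..<n} (\<lambda>_. {-1,1::real}))" by blast
qed

lemma finite_cube[simp]: "finite (cube n)"
  by (rule finite_subset[OF cube_sub]) (auto intro!: finite_PiE)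

definition ones :: "nat \<Rightarrow> nat \<Rightarrow> real" where "ones n = (\<lambda>i. if i < n then 1 else 0)"

lemma ones_cube: "ones n \<in> cube n" by (auto simp: ones_def cube_def)

lemma cube_ne[simp]: "cube n \<noteq> {}" using ones_cube by blast

lemma flip_cube: "x \<in> cube n \<Longrightarrow> j < n \<Longrightarrow> x(j := - x j) \<in> cube n"
  by (auto simp: cube_def)

lemma upd_cube: "x \<in> cube n \<Longrightarrow> j < n \<Longrightarrow> y \<in> {-1,1} \<Longrightarrow> x(j := y) \<in> cube n"
  by (auto simp: cube_def)

lemma sq_cube: "x \<in> cube n \<Longrightarrow> i < n \<Longrightarrow> x i * x i = 1"
  by (auto simp: cube_def)

lemma sum_prod_zero:
  assumes S: "S \<subseteq> {..<n}" "S \<noteq> {}"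
  shows "(\<Sum>x\<in>cube n. \<Prod>i\<in>S. x i) = (0::real)"
proof -
  obtain a where a: "a \<in> S" using S by blast
  have an: "a < n" using a S by auto
  have fS: "finite S" using S finite_subset by blast
  define fl where "fl = (\<lambda>x::nat\<Rightarrow>real. x(a := - x a))"
  have pr: "(\<Prod>i\<in>S. fl x i) = - (\<Prod>i\<in>S. x i)" for x
  proof -
    have "(\<Prod>i\<in>S. fl x i) = fl x a * (\<Prod>i\<in>S-{a}. fl x i)" using prod.remove[OF fS a] by simp
    also have "(\<Prod>i\<in>S-{a}. fl x i) = (\<Prod>i\<in>S-{a}. x i)" by (rule prod.cong) (auto simp: fl_def)
    also have "(\<Prod>i\<in>S. x i) = x a * (\<Prod>i\<in>S-{a}. x i)" using prod.remove[OF fS a] by simp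
    ultimately show ?thesis by (simp add: fl_def)
  qed
  have "(\<Sum>x\<in>cube n. \<Prod>i\<in>S. x i) = (\<Sum>x\<in>cube n. \<Prod>i\<in>S. fl x i)"
    by (rule sum.reindex_bij_witness[where i=fl and j=fl]) (auto simp: fl_def flip_cube an)
  also have "\<dots> = - (\<Sum>x\<in>cube n. \<Prod>i\<in>S. x i)" by (simp add: pr sum_negf)
  finally show ?thesis by simp
qed



lemma prod_mult_prod:
  assumes x: "x \<in> cube n" and S: "S \<subseteq> {..<n}" and T: "T \<subseteq> {..<n}"
  shows "(\<Prod>i\<in>S. x i) * (\<Prod>i\<in>T. x i) = (\<Prod>i\<in>(S-T)\<union>(T-S). x i)"
proof -
  have fS: "finite S" "finite T" using S T finite_subset by blast+
  have 1: "(\<Prod>i\<in>S. x i) = (\<Prod>i\<in>S-T. x i) * (\<Prod>i\<in>S\<inter>T. x i)"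
    using prod.subset_diff[of "S\<inter>T" S x] fS by (simp add: Diff_Int)
  have 2: "(\<Prod>i\<in>T. x i) = (\<Prod>i\<in>T-S. x i) * (\<Prod>i\<in>S\<inter>T. x i)"
    using prod.subset_diff[of "S\<inter>T" T x] fS by (simp add: Diff_Int Int_commute)
  have "(\<Prod>i\<in>S\<inter>T. x i) * (\<Prod>i\<in>S\<inter>T. x i) = (\<Prod>i\<in>S\<inter>T. x i * x i)"
    by (simp add: prod.distrib)
  also have "\<dots> = 1" using S x sq_cube by (intro prod.neutral) blast
  finally have 3: "(\<Prod>i\<in>S\<inter>T. x i) * (\<Prod>i\<in>S\<inter>T. x i) = 1" .
  have 4: "(\<Prod>i\<in>(S-T)\<union>(T-S). x i) = (\<Prod>i\<in>S-T. x i) * (\<Prod>i\<in>T-S. x i)"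
    using fS by (intro prod.union_disjoint) auto
  have "(\<Prod>i\<in>S. x i) * (\<Prod>i\<in>T. x i) = (\<Prod>i\<in>S-T. x i) * (\<Prod>i\<in>T-S. x i) * ((\<Prod>i\<in>S\<inter>T. x i) * (\<Prod>i\<in>S\<inter>T. x i))"
    unfolding 1 2 by (simp add: algebra_simps)
  then show ?thesis using 3 4 by simp
qed

lemma fourier_chi:
  assumes S: "S \<subseteq> {..<n}" and T: "T \<subseteq> {..<n}"
  shows "fourier n (chi n T) S = (if S = T then real (card (cube n)) / 2^n else 0)"
proof -
  have "fourier n (chi n T) S = (\<Sum>x\<in>cube n. \<Prod>i\<in>(T-S)\<union>(S-T). x i) / 2^n"
    unfolding fourier_def chi_def using prod_mult_prod[OF _ T S] by (simp cong: sum.cong)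
  moreover have "S \<noteq> T \<Longrightarrow> (\<Sum>x\<in>cube n. \<Prod>i\<in>(T-S)\<union>(S-T). x i) = 0"
    by (rule sum_prod_zero[of _ n]) (use S T in auto)
  ultimately show ?thesis by auto
qed

lemma card_cube_pos: "real (card (cube n)) / 2^n \<noteq> 0"
  using card_gt_0_iff by auto

lemma fourier_add: "fourier n (\<lambda>x. f x + g x) S = fourier n f S + fourier n g S"
  by (simp add: fourier_def sum.distrib distrib_right add_divide_distrib)

lemma fourier_scale: "fourier n (\<lambda>x. c * f x) S = c * fourier n f S"
  by (simp add: fourier_def sum_distrib_left mult.assoc)

lemma fourier_sum: "finite A \<Longrightarrow> fourier n (\<lambda>x. \<Sum>a\<in>A. F a x) S = (\<Sum>a\<in>A. fourier n (F a) S)"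
  by (induction A rule: finite_induct) (auto simp: fourier_def sum.distrib distrib_right add_divide_distrib)

lemma fourier_zero: "fourier n (\<lambda>x. 0) S = 0" by (simp add: fourier_def)

lemma prod_one_plus:
  assumes x: "x \<in> cube n" and y: "y \<in> cube n"
  shows "(\<Prod>i<n. 1 + x i * y i) = (if x = y then 2^n else 0)"
proof (cases "x = y")
  case True
  then show ?thesis using sq_cube[OF x] by simp
next
  case False
  then obtain i where "x i \<noteq> y i" by auto
  then have i: "i < n" "x i * y i = -1" using x y unfolding cube_def
    by (auto, metis not_le) (metis mult_minus_left mult_minus_right mult_cancel_left1 not_le)
  then have "(\<Prod>i<n. 1 + x i * y i) = 0" by (intro prod_zero) (auto intro!: bexI[of _ i])
  then show ?thesis using False by simp
qed

lemma fourier_inversion: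
  assumes x: "x \<in> cube n"
  shows "f x = (\<Sum>S\<in>Pow {..<n}. fourier n f S * (\<Prod>i\<in>S. x i))"
proof -
  have "(\<Sum>S\<in>Pow {..<n}. fourier n f S * (\<Prod>i\<in>S. x i))
      = (\<Sum>S\<in>Pow {..<n}. \<Sum>y\<in>cube n. f y * (\<Prod>i\<in>S. y i) * (\<Prod>i\<in>S. x i) / 2^n)"
    by (simp add: fourier_def sum_divide_distrib sum_distrib_right)
  also have "\<dots> = (\<Sum>y\<in>cube n. f y / 2^n * (\<Sum>S\<in>Pow {..<n}. \<Prod>i\<in>S. x i * y i))"
    by (subst sum.swap) (simp add: sum_distrib_left prod.distrib algebra_simps)
  also have "\<dots> = (\<Sum>y\<in>cube n. f y / 2^n * (\<Prod>i<n. 1 + x i * y i))"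
  proof -
    have "(\<Sum>S\<in>Pow {..<n}. \<Prod>i\<in>S. x i * y i) = (\<Prod>i<n. 1 + x i * y i)" for y
      using prod_add[of "{..<n}" "\<lambda>i. x i * y i" "\<lambda>_. 1"] by (simp add: add.commute)
    then show ?thesis by simp
  qed
  also have "\<dots> = (\<Sum>y\<in>cube n. if y = x then f x else 0)"
    by (rule sum.cong) (use x prod_one_plus in auto)
  also have "\<dots> = f x" using x by simp
  finally show ?thesis by simp
qed

lemma fin_deg_set: "finite {card S | S. S \<subseteq> {..<n::nat} \<and> P S}"
proof -
  have "{card S | S. S \<subseteq> {..<n} \<and> P S} \<subseteq> card ` Pow {..<n}" by auto
  then show ?thesis by (rule finite_subset) (intro finite_imageI finite_Pow_iff[THEN iffD2] finite_lessThan)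
qed

lemma deg_le_iff: "deg n f \<le> k \<longleftrightarrow> (\<forall>S. S \<subseteq> {..<n} \<and> fourier n f S \<noteq> 0 \<longrightarrow> card S \<le> k)"
  unfolding deg_def using fin_deg_set[of n "\<lambda>S. fourier n f S \<noteq> 0"]
  by (subst Max_le_iff) auto

lemma deg_ge: "S \<subseteq> {..<n} \<Longrightarrow> fourier n f S \<noteq> 0 \<Longrightarrow> card S \<le> deg n f"
  using deg_le_iff by blast

lemma deg_le_n: "deg n f \<le> n"
  unfolding deg_le_iff by (auto intro: card_mono[of "{..<n}", simplified])

lemma deg_chi: "S \<subseteq> {..<n} \<Longrightarrow> deg n (chi n S) = card S"
  apply (rule antisym)
   apply (subst deg_le_iff, auto simp: fourier_chi card_cube_pos split: if_splits)[1]
  apply (rule deg_ge) using card_cube_pos fourier_chi by auto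


definition sc :: "real \<Rightarrow> ((nat \<Rightarrow> real) \<Rightarrow> real) \<Rightarrow> ((nat \<Rightarrow> real) \<Rightarrow> real)" where
  "sc c f = (\<lambda>x. c * f x)"

interpretation FV: vector_space sc
  by unfold_locales (auto simp: sc_def plus_fun_def algebra_simps)

lemma fun_sum_apply: "(sum g A) x = (\<Sum>a\<in>A. g a x)"
  by (induction A rule: infinite_finite_induct) (auto simp: plus_fun_def)

definition Eb :: "nat \<Rightarrow> nat \<Rightarrow> ((nat \<Rightarrow> real) \<Rightarrow> real) set" where
  "Eb n k = chi n ` {S. S \<subseteq> {..<n} \<and> card S \<le> k}"

definition Wb :: "nat \<Rightarrow> nat \<Rightarrow> ((nat \<Rightarrow> real) \<Rightarrow> real) set" where
  "Wb n k = {f \<in> fspace n. deg n f \<le> k}"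

lemma fin_idx: "finite {S. S \<subseteq> {..<n::nat} \<and> P S}"
  by (rule finite_subset[of _ "Pow {..<n}"]) auto

lemma finite_Eb: "finite (Eb n k)" unfolding Eb_def by (intro finite_imageI fin_idx)

lemma chi_fspace: "chi n S \<in> fspace n" by (simp add: chi_def fspace_def)

lemma subspace_Wb: "FV.subspace (Wb n k)"
proof (rule FV.subspaceI)
  show "0 \<in> Wb n k" by (simp add: Wb_def fspace_def deg_le_iff fourier_def)
  show "x + y \<in> Wb n k" if "x \<in> Wb n k" "y \<in> Wb n k" for x y
    using that by (auto simp: Wb_def fspace_def deg_le_iff plus_fun_def fourier_add)
  show "sc c x \<in> Wb n k" if "x \<in> Wb n k" for c x
    using that by (auto simp: Wb_def fspace_def deg_le_iff sc_def fourier_scale)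
qed

lemma Eb_Wb: "Eb n k \<subseteq> Wb n k"
  by (auto simp: Eb_def Wb_def chi_fspace deg_chi)

lemma Wb_span: "Wb n k \<subseteq> FV.span (Eb n k)"
proof
  fix f assume f: "f \<in> Wb n k"
  let ?I = "{S. S \<subseteq> {..<n} \<and> card S \<le> k}"
  have "f = (\<Sum>S\<in>?I. sc (fourier n f S) (chi n S))"
  proof
    fix x
    show "f x = (\<Sum>S\<in>?I. sc (fourier n f S) (chi n S)) x"
    proof (cases "x \<in> cube n")
      case True
      have "f x = (\<Sum>S\<in>Pow {..<n}. fourier n f S * (\<Prod>i\<in>S. x i))" by (rule fourier_inversion[OF True])
      also have "\<dots> = (\<Sum>S\<in>?I. fourier n f S * (\<Prod>i\<in>S. x i))"
      proof (rule sum.mono_neutral_right)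
        show "\<forall>S\<in>Pow {..<n} - ?I. fourier n f S * (\<Prod>i\<in>S. x i) = 0"
          using f by (auto simp: Wb_def deg_le_iff)
      qed auto
      also have "\<dots> = (\<Sum>S\<in>?I. sc (fourier n f S) (chi n S)) x"
        using True by (simp add: fun_sum_apply sc_def chi_def)
      finally show ?thesis .
    next
      case False
      then show ?thesis using f by (simp add: fun_sum_apply sc_def chi_def Wb_def fspace_def)
    qed
  qed
  also have "\<dots> \<in> FV.span (Eb n k)"
    by (intro FV.span_sum FV.span_scale[unfolded sc_def[symmetric]] FV.span_base) (auto simp: Eb_def)
  finally show "f \<in> FV.span (Eb n k)" .
qed

lemma span_Eb: "FV.span (Eb n k) = Wb n k"
  using FV.span_minimal[OF Eb_Wb subspace_Wb] Wb_span by blast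

lemma inj_chi: "inj_on (chi n) {S. S \<subseteq> {..<n}}"
proof (rule inj_onI)
  fix S T assume "S \<in> {S. S \<subseteq> {..<n}}" "T \<in> {S. S \<subseteq> {..<n}}" "chi n S = chi n T"
  then show "S = T" using fourier_chi[of S n S] fourier_chi[of S n T] card_cube_pos[of n]
    by (auto split: if_splits)
qed

lemma indep_aux:
  assumes sum0: "(\<Sum>v\<in>Eb n k. sc (c v) v) = 0" and v: "v \<in> Eb n k"
  shows "c v = 0"
proof -
  let ?I = "{S. S \<subseteq> {..<n} \<and> card S \<le> k}"
  obtain S where S: "S \<in> ?I" "v = chi n S" using v by (auto simp: Eb_def)
  have inj: "inj_on (chi n) ?I" using inj_chi by (rule inj_on_subset) auto
  have h0: "(\<Sum>T\<in>?I. sc (c (chi n T)) (chi n T)) = 0"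
    using sum0 by (simp add: Eb_def sum.reindex[OF inj])
  have "(\<lambda>x. \<Sum>T\<in>?I. c (chi n T) * chi n T x) = (\<lambda>x. 0)"
  proof (rule ext)
    fix x
    have "(\<Sum>T\<in>?I. sc (c (chi n T)) (chi n T)) x = 0" using h0 by simp
    then show "(\<Sum>T\<in>?I. c (chi n T) * chi n T x) = 0" unfolding fun_sum_apply sc_def .
  qed
  then have "fourier n (\<lambda>x. \<Sum>T\<in>?I. c (chi n T) * chi n T x) S = fourier n (\<lambda>x. 0) S"
    by simp
  then have "(\<Sum>T\<in>?I. c (chi n T) * fourier n (chi n T) S) = 0"
    by (simp add: fourier_sum fin_idx fourier_scale fourier_zero)
  moreover have "(\<Sum>T\<in>?I. c (chi n T) * fourier n (chi n T) S) = c (chi n S) * (real (card (cube n)) / 2^n)"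
  proof -
    have "(\<Sum>T\<in>?I. c (chi n T) * fourier n (chi n T) S) = (\<Sum>T\<in>?I. if T = S then c (chi n S) * (real (card (cube n)) / 2^n) else 0)"
      by (rule sum.cong) (use S in \<open>auto simp: fourier_chi\<close>)
    also have "\<dots> = c (chi n S) * (real (card (cube n)) / 2^n)" using S fin_idx by (simp add: sum.delta')
    finally show ?thesis .
  qed
  ultimately have "c (chi n S) * (real (card (cube n)) / 2^n) = 0" by simp
  then have "c (chi n S) = 0" using card_cube_pos[of n] by simp
  then show "c v = 0" using S(2) by simp
qed



lemma indep_Eb: "FV.independent (Eb n k)"
  using FV.independent_if_scalars_zero[OF finite_Eb, of n k] indep_aux by metis

definition Ur :: "nat \<Rightarrow> (((nat \<Rightarrow> real) \<Rightarrow> real) \<Rightarrow> ((nat \<Rightarrow> real) \<Rightarrow> real)) \<Rightarrow> ((nat \<Rightarrow> real) \<Rightarrow> real) \<Rightarrow> ((nat \<Rightarrow> real) \<Rightarrow> real)" where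
  "Ur n U f = U (\<lambda>x. if x \<in> cube n then f x else 0)"

lemma restr_fspace: "f \<in> fspace n \<Longrightarrow> (\<lambda>x. if x \<in> cube n then f x else 0) = f"
  by (auto simp: fspace_def fun_eq_iff)

lemma Ur_fspace: "f \<in> fspace n \<Longrightarrow> Ur n U f = U f"
  by (simp add: Ur_def restr_fspace)

lemma restr_in: "(\<lambda>x. if x \<in> cube n then f x else 0) \<in> fspace n"
  by (simp add: fspace_def)

lemma mh_Ur:
  assumes bt: "basis_transform n U"
  shows "module_hom sc sc (Ur n U)"
proof -
  have m: "module sc" by (simp add: module_iff_vector_space FV.vector_space_axioms)
  have add: "Ur n U (f + g) = Ur n U f + Ur n U g" for f g
  proof -
    have "(\<lambda>x. if x \<in> cube n then (f + g) x else 0) = (\<lambda>x. (\<lambda>x. if x \<in> cube n then f x else 0) x + (\<lambda>x. if x \<in> cube n then g x else 0) x)"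
      by auto
    then show ?thesis using bt restr_in unfolding basis_transform_def Ur_def
      by (simp add: plus_fun_def)
  qed
  have scl: "Ur n U (sc c f) = sc c (Ur n U f)" for c f
  proof -
    have "(\<lambda>x. if x \<in> cube n then sc c f x else 0) = (\<lambda>x. c * (\<lambda>x. if x \<in> cube n then f x else 0) x)"
      by (auto simp: sc_def)
    then show ?thesis using bt restr_in unfolding basis_transform_def Ur_def
      by (simp add: sc_def)
  qed
  show ?thesis unfolding module_hom_def module_hom_axioms_def using m add scl by blast
qed

lemma Wb_fspace: "Wb n k \<subseteq> fspace n" by (auto simp: Wb_def)

context
  fixes n U assumes bt: "basis_transform n U" and cp: "compatible n U"
begin

lemma U_fspace: "f \<in> fspace n \<Longrightarrow> U f \<in> fspace n"
  using bt unfolding basis_transform_def bij_betw_def by blast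

lemma U_inj: "inj_on U (fspace n)"
  using bt unfolding basis_transform_def bij_betw_def by blast

lemma Ur_Eb: "Ur n U ` Eb n k \<subseteq> Wb n k"
proof
  fix y assume "y \<in> Ur n U ` Eb n k"
  then obtain S where S: "S \<subseteq> {..<n}" "card S \<le> k" "y = Ur n U (chi n S)" by (auto simp: Eb_def)
  then have "y = U (chi n S)" by (simp add: Ur_fspace chi_fspace)
  then show "y \<in> Wb n k" using S cp U_fspace[OF chi_fspace] by (auto simp: Wb_def compatible_def)
qed

lemma Ur_inj: "inj_on (Ur n U) (FV.span (Eb n k))"
proof -
  have "inj_on (Ur n U) (fspace n)" using U_inj by (rule inj_on_cong[THEN iffD1, rotated]) (simp add: Ur_fspace)
  then show ?thesis unfolding span_Eb using Wb_fspace inj_on_subset by blast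
qed

lemma Ur_image_Wb: "Ur n U ` Wb n k \<subseteq> Wb n k"
proof -
  have "FV.span (Ur n U ` Eb n k) \<subseteq> Wb n k" by (rule FV.span_minimal[OF Ur_Eb subspace_Wb])
  then show ?thesis using module_hom.span_image[OF mh_Ur[OF bt], of "Eb n k"] span_Eb by simp
qed

lemma Wb_image: "Wb n k \<subseteq> Ur n U ` Wb n k"
proof -
  let ?B = "Ur n U ` Eb n k"
  have iB: "FV.independent ?B"
    by (rule module_hom.independent_injective_image[OF mh_Ur[OF bt] indep_Eb Ur_inj])
  have cB: "card ?B = card (Eb n k)"
    by (rule card_image, rule inj_on_subset[OF Ur_inj]) (rule FV.span_superset)
  have "Wb n k \<subseteq> FV.span ?B"
  proof
    fix a assume a: "a \<in> Wb n k"
    show "a \<in> FV.span ?B"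
    proof (rule ccontr)
      assume na: "a \<notin> FV.span ?B"
      have "FV.independent (insert a ?B)" by (rule FV.independent_insertI[OF na iB])
      moreover have "insert a ?B \<subseteq> FV.span (Eb n k)"
        using a Ur_Eb span_Eb by auto
      ultimately have "card (insert a ?B) \<le> card (Eb n k)"
        using FV.independent_span_bound[OF finite_Eb] by blast
      moreover have "a \<notin> ?B" using na FV.span_base by blast
      moreover have "finite ?B" using finite_Eb by simp
      ultimately show False using cB by simp
    qed
  qed
  then show ?thesis using module_hom.span_image[OF mh_Ur[OF bt], of "Eb n k"] span_Eb by simp
qed

lemma deg_inv_chi:
  assumes S: "S \<subseteq> {..<n}"
  shows "deg n (inv_into (fspace n) U (chi n S)) = card S"
proof -
  let ?k = "card S"
  have "chi n S \<in> Wb n ?k" using S by (simp add: Wb_def chi_fspace deg_chi)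
  then obtain f where f: "f \<in> Wb n ?k" "chi n S = Ur n U f" using Wb_image by blast
  have ff: "f \<in> fspace n" using f Wb_fspace by blast
  have Uf: "U f = chi n S" using f ff by (simp add: Ur_fspace)
  have inv: "inv_into (fspace n) U (chi n S) = f"
    using inv_into_f_f[OF U_inj ff] Uf by simp
  have le: "deg n f \<le> ?k" using f by (simp add: Wb_def)
  have ge: "?k \<le> deg n f"
  proof (rule ccontr)
    assume "\<not> ?k \<le> deg n f"
    then have "f \<in> Wb n (?k - 1)" using ff by (simp add: Wb_def)
    then have "chi n S \<in> Wb n (?k - 1)" using Ur_image_Wb f by blast
    then have "card S \<le> ?k - 1" using S by (simp add: Wb_def deg_chi)
    moreover have "?k > 0" using \<open>\<not> ?k \<le> deg n f\<close> by simp
    ultimately show False by simp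
  qed
  show ?thesis using le ge inv by simp
qed

lemma deg_U_eq: "deg_U n U f = deg n f"
proof -
  have "{deg n (inv_into (fspace n) U (chi n S)) | S. S \<subseteq> {..<n} \<and> fourier n f S \<noteq> 0}
      = {card S | S. S \<subseteq> {..<n} \<and> fourier n f S \<noteq> 0}"
    using deg_inv_chi by metis
  then show ?thesis by (simp add: deg_U_def deg_def)
qed

end


lemma slln_pmf:
  fixes T :: "'a pmf" and Y :: "'a \<Rightarrow> real" and a b :: real
  assumes bnd: "\<And>x. Y x \<in> {a..b}" and ab: "a < b"
  shows "AE hs in PiM UNIV (\<lambda>_::nat. measure_pmf T).
           (\<lambda>n. (\<Sum>i<n. Y (hs i)) / real n) \<longlonglongrightarrow> measure_pmf.expectation T Y"
proof -
  define M where "M = PiM UNIV (\<lambda>_::nat. measure_pmf T)"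
  have psM: "prob_space M" unfolding M_def by (intro prob_space_PiM) (simp add: prob_space_measure_pmf)
  interpret Mp: prob_space M by (rule psM)
  have spM: "space M = UNIV \<rightarrow>\<^sub>E UNIV" by (simp add: M_def space_PiM)
  have comp_meas[measurable]: "(\<lambda>hs. hs i) \<in> measurable M (measure_pmf T)" for i
    unfolding M_def by (rule measurable_component_singleton) simp
  have comp_meas2[measurable]: "(\<lambda>hs. hs i) \<in> measurable M (count_space UNIV)" for i
    using comp_meas[of i] measurable_cong_sets[OF refl, of "measure_pmf T" "count_space UNIV" M] by simp
  have Y_meas[measurable]: "Y \<in> borel_measurable (measure_pmf T)" by simp
  have X_meas[measurable]: "(\<lambda>hs. Y (hs i)) \<in> borel_measurable M" for i by measurable
  have distr_comp: "distr M (measure_pmf T) (\<lambda>hs. hs i) = measure_pmf T" for i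
    unfolding M_def by (rule distr_PiM_component) (auto simp: prob_space_measure_pmf)
  have indep_comp: "Mp.indep_vars (\<lambda>_. measure_pmf T) (\<lambda>i hs. hs i) UNIV"
  proof (subst Mp.indep_vars_iff_distr_eq_PiM)
    show "distr M (Pi\<^sub>M UNIV (\<lambda>i. measure_pmf T)) (\<lambda>x. \<lambda>i\<in>UNIV. x i) = Pi\<^sub>M UNIV (\<lambda>i. distr M (measure_pmf T) (\<lambda>hs. hs i))"
    proof -
      have "distr M (Pi\<^sub>M UNIV (\<lambda>i. measure_pmf T)) (\<lambda>x. \<lambda>i\<in>UNIV. x i) = distr M M (\<lambda>x. x)"
        by (rule distr_cong) (auto simp: M_def)
      also have "\<dots> = M" by (rule distr_id)
      also have "\<dots> = Pi\<^sub>M UNIV (\<lambda>i. distr M (measure_pmf T) (\<lambda>hs. hs i))"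
        by (simp only: distr_comp) (simp add: M_def)
      finally show ?thesis .
    qed
  qed (fact comp_meas | simp)+
  have indepX: "Mp.indep_vars (\<lambda>_. borel) (\<lambda>i hs. Y (hs i)) UNIV"
    using Mp.indep_vars_compose2[OF indep_comp, of "\<lambda>_. Y" "\<lambda>_. borel"] by simp
  have dX: "distr M borel (\<lambda>hs. Y (hs i)) = distr (measure_pmf T) borel Y" for i
  proof -
    have "distr M borel (\<lambda>hs. Y (hs i)) = distr (distr M (measure_pmf T) (\<lambda>hs. hs i)) borel Y"
      by (subst distr_distr) (auto simp: comp_def)
    also have "\<dots> = distr (measure_pmf T) borel Y" by (simp add: distr_comp)
    finally show ?thesis .
  qed
  have distrX: "distr M borel (\<lambda>hs. Y (hs i)) = distr M borel (\<lambda>hs. Y (hs 0))" for i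
    by (simp add: dX)
  have mu: "Mp.expectation (\<lambda>hs. Y (hs 0)) = measure_pmf.expectation T Y"
  proof -
    have "measure_pmf.expectation T Y = integral\<^sup>L (distr M (measure_pmf T) (\<lambda>hs. hs 0)) Y"
      by (simp add: distr_comp)
    also have "\<dots> = Mp.expectation (\<lambda>hs. Y (hs 0))" by (rule integral_distr) auto
    finally show ?thesis by simp
  qed
  define mu0 where "mu0 = measure_pmf.expectation T Y"
  have hoeff: "Mp.prob {x\<in>space M. \<bar>(\<Sum>i\<in>{..<Suc n}. Y (x i)) / real (Suc n) - mu0\<bar> \<ge> \<epsilon>}
          \<le> 2 * exp (-2 * real (Suc n) * \<epsilon>\<^sup>2 / (b - a)\<^sup>2)" if eps: "\<epsilon> \<ge> 0" for n \<epsilon>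
  proof -
    interpret H: Hoeffding_ineq_iid M "{..<Suc n}" "\<lambda>i hs. Y (hs i)" "\<lambda>hs. Y (hs 0)" a b "Mp.expectation (\<lambda>hs. Y (hs 0))"
    proof unfold_locales
      show "Mp.indep_vars (\<lambda>_. borel) (\<lambda>i hs. Y (hs i)) {..<Suc n}"
        using Mp.indep_vars_subset[OF indepX] by blast
    qed (use distrX bnd in auto)
    have e: "Mp.expectation (\<lambda>hs. Y (hs 0)) = mu0" unfolding mu0_def mu ..
    have ne: "{..<Suc n} \<noteq> {}" by auto
    show ?thesis using H.Hoeffding_ineq_abs_ge'[OF eps ab ne] unfolding e card_lessThan .
  qed
  have ev: "AE x in M. eventually (\<lambda>n. \<bar>(\<Sum>i<Suc n. Y (x i)) / real (Suc n) - mu0\<bar> < 1 / real (Suc j)) sequentially" for j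
  proof -
    define \<epsilon> where "\<epsilon> = 1 / real (Suc j)"
    have e0: "\<epsilon> > 0" by (simp add: \<epsilon>_def)
    define A where "A n = {x\<in>space M. \<bar>(\<Sum>i\<in>{..<Suc n}. Y (x i)) / real (Suc n) - mu0\<bar> \<ge> \<epsilon>}" for n
    have Am[measurable]: "A n \<in> sets M" for n unfolding A_def by measurable
    define q where "q = exp (-2 * \<epsilon>\<^sup>2 / (b - a)\<^sup>2)"
    have q: "0 < q" "q < 1" using e0 ab by (auto simp: q_def)
    have bound: "Mp.prob (A n) \<le> 2 * q * q ^ n" for n
    proof -
      have arg: "-2 * real (Suc n) * \<epsilon>\<^sup>2 / (b - a)\<^sup>2 = real (Suc n) * (-2 * \<epsilon>\<^sup>2 / (b - a)\<^sup>2)"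
        using ab by (simp add: field_simps)
      have "exp (-2 * real (Suc n) * \<epsilon>\<^sup>2 / (b - a)\<^sup>2) = q ^ Suc n"
        unfolding q_def arg by (rule exp_of_nat_mult)
      then show ?thesis using hoeff[of \<epsilon> n] e0 unfolding A_def by simp
    qed
    have summ: "summable (\<lambda>n. Mp.prob (A n))"
    proof (rule summable_comparison_test)
      show "\<exists>N. \<forall>n\<ge>N. norm (Mp.prob (A n)) \<le> 2 * q * q ^ n" using bound by auto
      show "summable (\<lambda>n. 2 * q * q ^ n)" using q by (intro summable_mult summable_geometric) auto
    qed
    have "AE x in M. eventually (\<lambda>n. x \<in> space M - A n) sequentially"
      by (rule borel_cantelli_AE1[OF Am _ summ]) (simp add: Mp.emeasure_eq_measure)
    then show ?thesis
      by eventually_elim (auto simp: A_def \<epsilon>_def elim!: eventually_mono)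
  qed
  have "AE x in M. \<forall>j. eventually (\<lambda>n. \<bar>(\<Sum>i<Suc n. Y (x i)) / real (Suc n) - mu0\<bar> < 1 / real (Suc j)) sequentially"
    using ev by (simp add: AE_all_countable)
  then have "AE x in M. (\<lambda>n. (\<Sum>i<n. Y (x i)) / real n) \<longlonglongrightarrow> mu0"
  proof eventually_elim
    case (elim x)
    have "(\<lambda>n. (\<Sum>i<Suc n. Y (x i)) / real (Suc n)) \<longlonglongrightarrow> mu0"
    proof (rule LIMSEQ_I)
      fix r :: real assume r: "0 < r"
      obtain j where j: "1 / real (Suc j) < r"
        using reals_Archimedean[OF r] by (auto simp: inverse_eq_divide)
      obtain N where "\<forall>n\<ge>N. \<bar>(\<Sum>i<Suc n. Y (x i)) / real (Suc n) - mu0\<bar> < 1 / real (Suc j)"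
        using elim[rule_format, of j] by (auto simp: eventually_sequentially)
      then show "\<exists>N. \<forall>n\<ge>N. norm ((\<Sum>i<Suc n. Y (x i)) / real (Suc n) - mu0) < r"
        using j by force
    qed
    then show ?case by (rule LIMSEQ_imp_Suc)
  qed
  then show ?thesis unfolding M_def mu0_def .
qed


lemma sum_upd:
  fixes b x :: "nat \<Rightarrow> real"
  assumes "j \<in> A" "finite A"
  shows "(\<Sum>i\<in>A. b i * (x(j:=y)) i) = (\<Sum>i\<in>A. b i * x i) + b j * (y - x j)"
proof -
  have 1: "(\<Sum>i\<in>A. b i * (x(j:=y)) i) = b j * (x(j:=y)) j + (\<Sum>i\<in>A-{j}. b i * (x(j:=y)) i)"
    by (rule sum.remove[OF assms(2,1)])
  have 2: "(\<Sum>i\<in>A-{j}. b i * (x(j:=y)) i) = (\<Sum>i\<in>A-{j}. b i * x i)" by (rule sum.cong) auto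
  have 3: "(\<Sum>i\<in>A. b i * x i) = b j * x j + (\<Sum>i\<in>A-{j}. b i * x i)"
    by (rule sum.remove[OF assms(2,1)])
  show ?thesis unfolding 1 2 3 by (simp add: algebra_simps)
qed

lemma card_le1_cases:
  assumes "S \<subseteq> {..<d::nat}" "card S \<le> 1"
  shows "S \<in> insert {} ((\<lambda>j. {j}) ` {..<d})"
proof -
  have fin: "finite S" using assms(1) finite_subset by blast
  show ?thesis
  proof (cases "card S = 0")
    case True then show ?thesis using fin by simp
  next
    case False
    then have "card S = 1" using assms by simp
    then obtain j where "S = {j}" by (auto simp: card_1_singleton_iff)
    then show ?thesis using assms by auto
  qed
qed

lemma deg1_rep:
  assumes deg: "deg d f \<le> 1" and x: "x \<in> cube d"
  shows "f x = fourier d f {} + (\<Sum>j<d. fourier d f {j} * x j)"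
proof -
  let ?g = "\<lambda>S. fourier d f S * (\<Prod>i\<in>S. x i)"
  let ?Q = "insert {} ((\<lambda>j. {j}) ` {..<d})"
  have "f x = (\<Sum>S\<in>Pow {..<d}. ?g S)" by (rule fourier_inversion[OF x])
  also have "\<dots> = (\<Sum>S\<in>?Q. ?g S)"
  proof (rule sum.mono_neutral_right)
    show "\<forall>S\<in>Pow {..<d} - ?Q. ?g S = 0"
    proof
      fix S assume S: "S \<in> Pow {..<d} - ?Q"
      then have "\<not> card S \<le> 1" using card_le1_cases[of S d] by auto
      then have "fourier d f S = 0" using deg S by (auto simp: deg_le_iff)
      then show "?g S = 0" by simp
    qed
  qed auto
  also have "\<dots> = ?g {} + (\<Sum>S\<in>(\<lambda>j. {j}) ` {..<d}. ?g S)"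
    by (rule sum.insert) auto
  also have "(\<Sum>S\<in>(\<lambda>j. {j}) ` {..<d}. ?g S) = (\<Sum>j<d. ?g {j})"
    by (rule sum.reindex[unfolded comp_def]) (auto simp: inj_on_def)
  finally show ?thesis by simp
qed

lemma dictator:
  assumes deg: "deg d f \<le> 1" and vals: "\<forall>x\<in>cube d. f x \<in> {-1,1}"
    and nc: "x0 \<in> cube d" "y0 \<in> cube d" "f x0 \<noteq> f y0"
  shows "\<exists>j<d. \<exists>s\<in>{-1,1}. \<forall>x\<in>cube d. f x = s * x j"
proof -
  define a where "a = fourier d f {}"
  define b where "b j = fourier d f {j}" for j
  have rep: "f x = a + (\<Sum>i<d. b i * x i)" if "x \<in> cube d" for x
    using deg1_rep[OF deg that] by (simp add: a_def b_def)
  define on where "on = ones d"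
  have oC: "on \<in> cube d" by (simp add: on_def ones_cube)
  have oj: "j < d \<Longrightarrow> on j = 1" for j by (simp add: on_def ones_def)
  define c where "c = f on"
  have fu: "f (on(j := -1)) = c - 2 * b j" if j: "j < d" for j
  proof -
    have "f (on(j := -1)) = a + ((\<Sum>i<d. b i * on i) + b j * (-1 - on j))"
      using rep[OF upd_cube[OF oC j]] sum_upd[of j "{..<d}" b on "-1"] j by simp
    also have "\<dots> = c - 2 * b j" using rep[OF oC] oj[OF j] by (simp add: c_def)
    finally show ?thesis .
  qed
  have uC: "j < d \<Longrightarrow> on(j := -1) \<in> cube d" for j using upd_cube[OF oC] by simp
  have cv: "c = -1 \<or> c = 1" using vals oC by (auto simp: c_def)
  have bj: "b j = -1 \<or> b j = 0 \<or> b j = 1" if j: "j < d" for j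
  proof -
    have "f (on(j := -1)) = -1 \<or> f (on(j := -1)) = 1" using vals uC[OF j] by auto
    then show ?thesis using cv fu[OF j] by auto
  qed
  have two: "b j = 0 \<or> b k = 0" if jk: "j < d" "k < d" "j \<noteq> k" for j k
  proof (rule ccontr)
    assume nz: "\<not> (b j = 0 \<or> b k = 0)"
    define w where "w = (on(j := -1))(k := -1)"
    have wC: "w \<in> cube d" unfolding w_def by (intro upd_cube uC jk) auto
    have "f w = a + ((\<Sum>i<d. b i * (on(j := -1)) i) + b k * (-1 - (on(j := -1)) k))"
      using rep[OF wC] sum_upd[of k "{..<d}" b "on(j := -1)" "-1"] jk by (simp add: w_def)
    also have "\<dots> = c - 2 * b j - 2 * b k"
      using rep[OF uC[OF jk(1)]] fu[OF jk(1)] oj[OF jk(2)] jk(3) by simp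
    finally have fw: "f w = c - 2 * b j - 2 * b k" .
    have "f w = -1 \<or> f w = 1" using vals wC by auto
    moreover have "f (on(j := -1)) = -1 \<or> f (on(j := -1)) = 1" using vals uC[OF jk(1)] by auto
    moreover have "f (on(k := -1)) = -1 \<or> f (on(k := -1)) = 1" using vals uC[OF jk(2)] by auto
    ultimately show False using fw fu[OF jk(1)] fu[OF jk(2)] cv bj[OF jk(1)] bj[OF jk(2)] nz by auto
  qed
  have "\<exists>j<d. b j \<noteq> 0"
  proof (rule ccontr)
    assume "\<not> (\<exists>j<d. b j \<noteq> 0)"
    then have "f x = a" if "x \<in> cube d" for x using rep[OF that] by simp
    then show False using nc by simp
  qed
  then obtain j where j: "j < d" "b j \<noteq> 0" by blast
  have others: "i < d \<Longrightarrow> i \<noteq> j \<Longrightarrow> b i = 0" for i using two[of i j] j by auto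
  have rep2: "f x = a + b j * x j" if x: "x \<in> cube d" for x
  proof -
    have "(\<Sum>i<d. b i * x i) = b j * x j + (\<Sum>i\<in>{..<d}-{j}. b i * x i)"
      using sum.remove[of "{..<d}" j] j by simp
    also have "(\<Sum>i\<in>{..<d}-{j}. b i * x i) = 0" using others by (intro sum.neutral) auto
    finally show ?thesis using rep[OF x] by simp
  qed
  have "a = 0"
  proof -
    have "f on = -1 \<or> f on = 1" using vals oC by auto
    moreover have "f (on(j := -1)) = -1 \<or> f (on(j := -1)) = 1" using vals uC[OF j(1)] by auto
    moreover have "f on = a + b j" using rep2[OF oC] oj[OF j(1)] by simp
    moreover have "f (on(j := -1)) = a - b j" using rep2[OF uC[OF j(1)]] by simp
    ultimately show ?thesis using bj[OF j(1)] j(2) by auto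
  qed
  then show ?thesis using rep2 j bj[OF j(1)] by auto
qed


definition compC :: "nat \<Rightarrow> ((nat \<Rightarrow> real) \<Rightarrow> (nat \<Rightarrow> real)) \<Rightarrow> ((nat \<Rightarrow> real) \<Rightarrow> real) \<Rightarrow> ((nat \<Rightarrow> real) \<Rightarrow> real)" where
  "compC d \<tau> h = (\<lambda>w. if w \<in> cube d then h (\<tau> w) else 0)"

definition Om :: "real set \<Rightarrow> nat \<Rightarrow> ((nat \<Rightarrow> real) \<Rightarrow> real) set" where
  "Om V d = {h \<in> fspace d. \<forall>x\<in>cube d. h x \<in> V}"

lemma Fk_Om: "Fk V d k = {h \<in> Om V d. deg d h \<le> k}"
  by (auto simp: Fk_def Om_def)

lemma finite_Om: assumes "finite V" shows "finite (Om V d)"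
proof -
  have "Om V d \<subseteq> (\<lambda>g x. if x \<in> cube d then g x else 0) ` PiE (cube d) (\<lambda>_. V)"
  proof
    fix h assume h: "h \<in> Om V d"
    have "restrict h (cube d) \<in> PiE (cube d) (\<lambda>_. V)" using h by (auto simp: Om_def)
    moreover have "h = (\<lambda>x. if x \<in> cube d then restrict h (cube d) x else 0)"
      using h by (auto simp: Om_def fspace_def fun_eq_iff)
    ultimately show "h \<in> (\<lambda>g x. if x \<in> cube d then g x else 0) ` PiE (cube d) (\<lambda>_. V)" by blast
  qed
  then show ?thesis by (rule finite_subset) (intro finite_imageI finite_PiE finite_cube assms)
qed

lemma finite_Fk: "finite V \<Longrightarrow> finite (Fk V d k)"
  unfolding Fk_Om using finite_Om by simp

lemma const_Fk:
  assumes "1 \<in> V" shows "(\<lambda>x. if x \<in> cube d then 1 else 0) \<in> Fk V d k"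
proof -
  have "deg d (\<lambda>x. if x \<in> cube d then 1 else 0) \<le> k"
  proof (subst deg_le_iff, intro allI impI)
    fix S assume S: "S \<subseteq> {..<d} \<and> fourier d (\<lambda>x. if x \<in> cube d then 1 else 0) S \<noteq> 0"
    have "S = {}"
    proof (rule ccontr)
      assume "S \<noteq> {}"
      then have "(\<Sum>x\<in>cube d. \<Prod>i\<in>S. x i) = 0" using S sum_prod_zero by blast
      moreover have "fourier d (\<lambda>x. if x \<in> cube d then 1 else 0) S = (\<Sum>x\<in>cube d. \<Prod>i\<in>S. x i) / 2^d"
        unfolding fourier_def by (simp cong: sum.cong)
      ultimately show False using S by simp
    qed
    then show "card S \<le> k" by simp
  qed
  then show ?thesis using assms by (auto simp: Fk_def fspace_def)
qed

lemma Fk_ne: "1 \<in> V \<Longrightarrow> Fk V d k \<noteq> {}" using const_Fk by blast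

lemma compC_Om: "\<tau> ` cube d \<subseteq> cube d \<Longrightarrow> h \<in> Om V d \<Longrightarrow> compC d \<tau> h \<in> Om V d"
  by (auto simp: Om_def compC_def fspace_def)

lemma compC_inj:
  assumes "\<tau> ` cube d = cube d" shows "inj_on (compC d \<tau>) (fspace d)"
proof (rule inj_onI)
  fix h1 h2 assume h: "h1 \<in> fspace d" "h2 \<in> fspace d" "compC d \<tau> h1 = compC d \<tau> h2"
  show "h1 = h2"
  proof
    fix x show "h1 x = h2 x"
    proof (cases "x \<in> cube d")
      case True
      then obtain w where w: "w \<in> cube d" "x = \<tau> w" using assms by blast
      have "compC d \<tau> h1 w = compC d \<tau> h2 w" using h by simp
      then show ?thesis using w by (simp add: compC_def)
    next
      case False then show ?thesis using h by (simp add: fspace_def)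
    qed
  qed
qed

lemma swap_sum:
  fixes D :: "'a \<Rightarrow> nat"
  assumes fA: "finite A" and fB: "finite B" and c: "card A = card B"
    and hi: "\<forall>h\<in>B-A. k < D h" and lo: "\<forall>h\<in>A. D h \<le> k"
  shows "sum D A + card (B - A) \<le> sum D B"
proof -
  have 1: "sum D A = sum D (A \<inter> B) + sum D (A - B)" using sum.Int_Diff[OF fA] by blast
  have 2: "sum D B = sum D (A \<inter> B) + sum D (B - A)" using sum.Int_Diff[OF fB, of D A] by (simp add: Int_commute)
  have c1: "card (A - B) = card A - card (A \<inter> B)" using fA by (intro card_Diff_subset_Int) simp
  have c2: "card (B - A) = card B - card (A \<inter> B)" using fB by (metis Int_commute card_Diff_subset_Int finite_Int)
  have cc: "card (A - B) = card (B - A)" using c1 c2 c by simp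
  have 3: "sum D (A - B) \<le> card (A - B) * k" using lo sum_bounded_above[of "A - B" D k] by simp
  have 4: "card (B - A) * Suc k \<le> sum D (B - A)"
  proof -
    have "of_nat (card (B - A)) * Suc k \<le> sum D (B - A)"
      by (rule sum_bounded_below) (metis DiffI Suc_leI hi)
    then show ?thesis by simp
  qed
  have "card (B - A) * Suc k = card (B - A) * k + card (B - A)" by simp
  moreover have "sum D (A - B) \<le> card (B - A) * k" using 3 cc by simp
  ultimately show ?thesis using 1 2 4 by linarith
qed

lemma compare:
  assumes tau: "\<tau> ` cube d = cube d" and fV: "finite V"
  shows "(\<Sum>h\<in>Fk V d k. deg d h) + card (compC d \<tau> ` Fk V d k - Fk V d k)
           \<le> (\<Sum>h\<in>Fk V d k. deg d (compC d \<tau> h))"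
proof -
  let ?A = "Fk V d k" and ?B = "compC d \<tau> ` Fk V d k"
  have inj: "inj_on (compC d \<tau>) ?A"
    using compC_inj[OF tau] by (rule inj_on_subset) (auto simp: Fk_def)
  have fA: "finite ?A" using finite_Fk[OF fV] .
  have sB: "sum (deg d) ?B = (\<Sum>h\<in>?A. deg d (compC d \<tau> h))"
    using sum.reindex[OF inj] by simp
  have "sum (deg d) ?A + card (?B - ?A) \<le> sum (deg d) ?B"
  proof (rule swap_sum)
    show "card ?A = card ?B" using card_image[OF inj] by simp
    show "\<forall>h\<in>?B - ?A. k < deg d h"
    proof
      fix h assume h: "h \<in> ?B - ?A"
      then have "h \<in> Om V d" using compC_Om[of \<tau> d] tau by (auto simp: Fk_Om)
      then show "k < deg d h" using h by (auto simp: Fk_Om)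
    qed
    show "\<forall>h\<in>?A. deg d h \<le> k" by (auto simp: Fk_def)
  qed (use fA in auto)
  then show ?thesis using sB by simp
qed


lemma setK:
  fixes K :: "nat pmf"
  assumes "\<forall>k\<in>{1..d}. pmf K k = p k" "(\<Sum>k=1..d. p k) = 1"
  shows "set_pmf K \<subseteq> {1..d}"
proof
  fix x assume x: "x \<in> set_pmf K"
  show "x \<in> {1..d}"
  proof (rule ccontr)
    assume nx: "x \<notin> {1..d}"
    have "measure (measure_pmf K) (insert x {1..d}) = sum (pmf K) (insert x {1..d})"
      by (rule measure_measure_pmf_finite) simp
    also have "\<dots> = pmf K x + sum (pmf K) {1..d}" using nx by simp
    also have "sum (pmf K) {1..d} = 1" using assms by simp
    finally have "measure (measure_pmf K) (insert x {1..d}) = pmf K x + 1" .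
    moreover have "pmf K x > 0" using x by (simp add: pmf_positive)
    moreover have "measure (measure_pmf K) (insert x {1..d}) \<le> 1" by simp
    ultimately show False by simp
  qed
qed

lemma expect_T:
  assumes sK: "set_pmf K \<subseteq> {1..d}" and fV: "finite V" and V1: "1 \<in> V"
  shows "measure_pmf.expectation (task_pmf V d K) Y
       = (\<Sum>k\<in>{1..d}. pmf K k * ((\<Sum>h\<in>Fk V d k. Y h) / real (card (Fk V d k))))"
  unfolding task_pmf_def
proof (subst pmf_expectation_bind[of "{1..d}"])
  show "(\<Sum>a\<in>{1..d}. pmf K a *\<^sub>R measure_pmf.expectation (pmf_of_set (Fk V d a)) Y) =
        (\<Sum>k\<in>{1..d}. pmf K k * ((\<Sum>h\<in>Fk V d k. Y h) / real (card (Fk V d k))))"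
    by (rule sum.cong) (auto simp: integral_pmf_of_set[OF Fk_ne[OF V1] finite_Fk[OF fV]])
qed (use sK finite_Fk[OF fV] Fk_ne[OF V1] in auto)

lemma g_of_eq:
  assumes bij: "bij_betw (\<Phi> \<circ> \<psi>) (cube d) (cube d)"
  shows "g_of d \<psi> \<Phi> h = compC d (inv_into (cube d) (\<Phi> \<circ> \<psi>)) h"
  unfolding g_of_def
proof (rule the_equality)
  let ?s = "\<Phi> \<circ> \<psi>"
  have inj: "inj_on ?s (cube d)" using bij by (simp add: bij_betw_def)
  have img: "?s ` cube d = cube d" using bij by (simp add: bij_betw_def)
  show "compC d (inv_into (cube d) ?s) h \<in> fspace d \<and>
        (\<forall>z\<in>cube d. compC d (inv_into (cube d) ?s) h (\<Phi> (\<psi> z)) = h z)"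
  proof
    show "compC d (inv_into (cube d) ?s) h \<in> fspace d" by (simp add: compC_def fspace_def)
    show "\<forall>z\<in>cube d. compC d (inv_into (cube d) ?s) h (\<Phi> (\<psi> z)) = h z"
    proof
      fix z assume z: "z \<in> cube d"
      have "\<Phi> (\<psi> z) \<in> cube d" using img z by auto
      moreover have "inv_into (cube d) ?s (\<Phi> (\<psi> z)) = z" using inv_into_f_f[OF inj z] by simp
      ultimately show "compC d (inv_into (cube d) ?s) h (\<Phi> (\<psi> z)) = h z" by (simp add: compC_def)
    qed
  qed
  fix g assume g: "g \<in> fspace d \<and> (\<forall>z\<in>cube d. g (\<Phi> (\<psi> z)) = h z)"
  show "g = compC d (inv_into (cube d) ?s) h"
  proof
    fix w show "g w = compC d (inv_into (cube d) ?s) h w"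
    proof (cases "w \<in> cube d")
      case True
      have w0: "?s (inv_into (cube d) ?s w) = w" using f_inv_into_f[of w ?s "cube d"] True img by simp
      then have w: "w = ?s (inv_into (cube d) ?s w)" by simp
      have iw: "inv_into (cube d) ?s w \<in> cube d" using True img by (metis inv_into_into)
      have "g w = h (inv_into (cube d) ?s w)" using g iw w by (metis comp_apply)
      then show ?thesis using True by (simp add: compC_def)
    next
      case False then show ?thesis using g by (simp add: compC_def fspace_def)
    qed
  qed
qed


lemma min_implies_sub:
  assumes d1: "1 \<le> d" and pp: "\<forall>k\<in>{1..d}. 0 < p k" and fV: "finite V" and V1: "1 \<in> V"
    and tau: "\<tau> ` cube d = cube d"
    and le: "(\<Sum>k\<in>{1..d}. p k * ((\<Sum>h\<in>Fk V d k. real (deg d (compC d \<tau> h))) / real (card (Fk V d k))))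
             \<le> (\<Sum>k\<in>{1..d}. p k * ((\<Sum>h\<in>Fk V d k. real (deg d h)) / real (card (Fk V d k))))"
  shows "compC d \<tau> ` Fk V d 1 \<subseteq> Fk V d 1"
proof -
  define N where "N k = real (card (Fk V d k))" for k
  define A where "A k = (\<Sum>h\<in>Fk V d k. real (deg d (compC d \<tau> h)))" for k
  define B where "B k = (\<Sum>h\<in>Fk V d k. real (deg d h))" for k
  define c where "c k = real (card (compC d \<tau> ` Fk V d k - Fk V d k))" for k
  have cmp: "B k + c k \<le> A k" for k
  proof -
    have "(\<Sum>h\<in>Fk V d k. deg d h) + card (compC d \<tau> ` Fk V d k - Fk V d k)
           \<le> (\<Sum>h\<in>Fk V d k. deg d (compC d \<tau> h))" by (rule compare[OF tau fV])
    then have "real ((\<Sum>h\<in>Fk V d k. deg d h) + card (compC d \<tau> ` Fk V d k - Fk V d k))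
           \<le> real (\<Sum>h\<in>Fk V d k. deg d (compC d \<tau> h))" by linarith
    then show ?thesis by (simp add: A_def B_def c_def)
  qed
  have Npos: "N k > 0" for k using finite_Fk[OF fV] Fk_ne[OF V1] by (simp add: N_def card_gt_0_iff)
  have "(\<Sum>k\<in>{1..d}. p k * ((A k - B k) / N k)) = (\<Sum>k\<in>{1..d}. p k * (A k / N k)) - (\<Sum>k\<in>{1..d}. p k * (B k / N k))"
    by (simp add: sum_subtractf[symmetric] diff_divide_distrib right_diff_distrib)
  also have "\<dots> \<le> 0" using le by (simp add: A_def B_def N_def)
  finally have s0: "(\<Sum>k\<in>{1..d}. p k * ((A k - B k) / N k)) \<le> 0" .
  have nn: "\<forall>k\<in>{1..d}. 0 \<le> p k * ((A k - B k) / N k)"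
  proof
    fix k assume k: "k \<in> {1..d}"
    have "0 \<le> A k - B k" using cmp[of k] by (simp add: c_def)
    moreover have "0 < p k" using pp k by blast
    ultimately show "0 \<le> p k * ((A k - B k) / N k)" using Npos[of k]
      by (intro mult_nonneg_nonneg divide_nonneg_pos) auto
  qed
  have "p 1 * ((A 1 - B 1) / N 1) \<le> (\<Sum>k\<in>{1..d}. p k * ((A k - B k) / N k))"
    by (rule member_le_sum) (use nn d1 in auto)
  then have "p 1 * ((A 1 - B 1) / N 1) \<le> 0" using s0 by linarith
  moreover have "0 < p 1" using pp d1 by auto
  ultimately have "A 1 - B 1 \<le> 0" using Npos[of 1]
    by (simp add: mult_le_0_iff divide_le_0_iff)
  then have "c 1 \<le> 0" using cmp[of 1] by linarith
  then have "card (compC d \<tau> ` Fk V d 1 - Fk V d 1) = 0" by (simp add: c_def)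
  moreover have "finite (compC d \<tau> ` Fk V d 1 - Fk V d 1)" using finite_Fk[OF fV] by simp
  ultimately show ?thesis by auto
qed

lemma perm_extract:
  assumes bij: "bij_betw \<sigma> (cube d) (cube d)"
    and sub: "compC d (inv_into (cube d) \<sigma>) ` Fk V d 1 \<subseteq> Fk V d 1"
    and V: "{-1,1} \<subseteq> V"
  shows "\<exists>\<pi> s. \<pi> permutes {..<d} \<and> (\<forall>j<d. s j \<in> {-1, 1::real}) \<and>
               (\<forall>j<d. \<forall>z\<in>cube d. \<sigma> z j = s j * z (\<pi> j))"
proof -
  let ?C = "cube d"
  define \<tau> where "\<tau> = inv_into ?C \<sigma>"
  have inj: "inj_on \<sigma> ?C" and img: "\<sigma> ` ?C = ?C" using bij by (auto simp: bij_betw_def)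
  have tbij: "bij_betw \<tau> ?C ?C" unfolding \<tau>_def using bij_betw_inv_into[OF bij] .
  have timg: "\<tau> ` ?C = ?C" using tbij by (simp add: bij_betw_def)
  have tsig: "\<tau> (\<sigma> z) = z" if "z \<in> ?C" for z unfolding \<tau>_def using inv_into_f_f[OF inj that] .
  have coord: "\<exists>j<d. \<exists>s\<in>{-1,1}. \<forall>w\<in>?C. \<tau> w i = s * w j" if i: "i < d" for i
  proof -
    let ?f = "compC d \<tau> (chi d {i})"
    have chiF: "chi d {i} \<in> Fk V d 1"
      using i V by (auto simp: Fk_def chi_fspace deg_chi chi_def cube_def)
    have fF: "?f \<in> Fk V d 1" using sub chiF unfolding \<tau>_def by blast
    have fw: "?f w = \<tau> w i" if "w \<in> ?C" for w
      using that timg by (auto simp: compC_def chi_def)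
    have "ones d \<in> ?C" by (rule ones_cube)
    then obtain w1 where w1: "w1 \<in> ?C" "\<tau> w1 = ones d" using timg by (metis imageE)
    have "(ones d)(i := -1) \<in> ?C" using upd_cube[OF ones_cube i] by simp
    then obtain w2 where w2: "w2 \<in> ?C" "\<tau> w2 = (ones d)(i := -1)" using timg by (metis imageE)
    have deg1: "deg d ?f \<le> 1" using fF by (simp add: Fk_def)
    have vals: "\<forall>x\<in>?C. ?f x \<in> {-1,1}"
    proof
      fix x assume x: "x \<in> ?C"
      have "\<tau> x \<in> ?C" using x timg by blast
      then show "?f x \<in> {-1,1}" using fw[OF x] i by (auto simp: cube_def)
    qed
    have "?f w1 \<noteq> ?f w2" using fw[OF w1(1)] fw[OF w2(1)] w1(2) w2(2) i by (simp add: ones_def)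
    from dictator[OF deg1 vals w1(1) w2(1) this] obtain j s where
      "j < d" "s \<in> {-1,1}" "\<forall>x\<in>?C. ?f x = s * x j" by blast
    then show ?thesis using fw by (metis)
  qed
  have "\<forall>i\<in>{..<d}. \<exists>j. j < d \<and> (\<exists>s\<in>{-1,1}. \<forall>w\<in>?C. \<tau> w i = s * w j)" using coord by blast
  then obtain J where J: "\<forall>i\<in>{..<d}. J i < d \<and> (\<exists>s\<in>{-1,1}. \<forall>w\<in>?C. \<tau> w i = s * w (J i))"
    by (metis bchoice)
  then obtain sg where sg: "\<forall>i\<in>{..<d}. sg i \<in> {-1,1::real} \<and> (\<forall>w\<in>?C. \<tau> w i = sg i * w (J i))"
    by (metis bchoice)
  have key: "\<sigma> z (J i) = sg i * z i" if z: "z \<in> ?C" and i: "i < d" for z i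
  proof -
    have sz: "\<sigma> z \<in> ?C" using z img by blast
    have "z i = sg i * \<sigma> z (J i)" using sg i sz tsig[OF z] by (metis lessThan_iff)
    moreover have "sg i = -1 \<or> sg i = 1" using sg i by auto
    then have "sg i * sg i = 1" by auto
    ultimately show ?thesis by (metis mult.assoc mult_1)
  qed
  have injJ: "inj_on J {..<d}"
  proof (rule inj_onI)
    fix i1 i2 assume i: "i1 \<in> {..<d}" "i2 \<in> {..<d}" and eq: "J i1 = J i2"
    show "i1 = i2"
    proof (rule ccontr)
      assume ne: "i1 \<noteq> i2"
      have o: "ones d \<in> ?C" by (rule ones_cube)
      have u: "(ones d)(i2 := -1) \<in> ?C" using upd_cube[OF ones_cube, of i2 d "-1"] i by simp
      have "sg i1 * ones d i1 = sg i2 * ones d i2" using key[OF o, of i1] key[OF o, of i2] eq i by simp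
      then have e1: "sg i1 = sg i2" using i by (simp add: ones_def)
      have "sg i1 * ((ones d)(i2 := -1)) i1 = sg i2 * ((ones d)(i2 := -1)) i2"
        using key[OF u, of i1] key[OF u, of i2] eq i by simp
      then have e2: "sg i1 = - sg i2" using i ne by (simp add: ones_def)
      have "sg i1 \<in> {-1,1}" using sg i by auto
      then show False using e1 e2 by auto
    qed
  qed
  have Jimg: "J ` {..<d} = {..<d}"
    by (rule endo_inj_surj) (use J injJ in auto)
  have Jbij: "bij_betw J {..<d} {..<d}" using injJ Jimg by (simp add: bij_betw_def)
  define \<pi> where "\<pi> j = (if j < d then inv_into {..<d} J j else j)" for j
  have pibij: "bij_betw \<pi> {..<d} {..<d}"
  proof -
    have "bij_betw (inv_into {..<d} J) {..<d} {..<d}" using bij_betw_inv_into[OF Jbij] .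
    then show ?thesis by (rule bij_betw_cong[THEN iffD1, rotated]) (simp add: \<pi>_def)
  qed
  have piperm: "\<pi> permutes {..<d}"
    by (rule bij_imp_permutes[OF pibij]) (simp add: \<pi>_def)
  have Jpi: "J (\<pi> j) = j" if "j < d" for j
    using that Jimg by (simp add: \<pi>_def f_inv_into_f)
  have pid: "\<pi> j < d" if "j < d" for j using pibij that by (auto simp: bij_betw_def)
  show ?thesis
  proof (intro exI conjI)
    show "\<pi> permutes {..<d}" by (rule piperm)
    show "\<forall>j<d. (\<lambda>j. sg (\<pi> j)) j \<in> {-1,1}" using sg pid by auto
    show "\<forall>j<d. \<forall>z\<in>?C. \<sigma> z j = (\<lambda>j. sg (\<pi> j)) j * z (\<pi> j)"
      using key pid Jpi by metis
  qed
qed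


theorem theorem6:
  fixes d m :: nat and \<psi> :: "(nat \<Rightarrow> real) \<Rightarrow> (nat \<Rightarrow> real)" and V :: "real set"
    and p :: "nat \<Rightarrow> real" and K :: "nat pmf"
    and Ud Um :: "((nat \<Rightarrow> real) \<Rightarrow> real) \<Rightarrow> ((nat \<Rightarrow> real) \<Rightarrow> real)"
  assumes "1 \<le> d" and "d \<le> m"
    and "\<psi> ` cube d \<subseteq> cube m" and "inj_on \<psi> (cube d)"
    and "finite V" and "{-1, 1} \<subseteq> V"
    and "\<forall>k\<in>{1..d}. 0 < p k \<and> p k < 1" and "(\<Sum>k=1..d. p k) = 1"
    and "\<forall>k\<in>{1..d}. pmf K k = p k"
    and "basis_transform d Ud" and "compatible d Ud"
    and "basis_transform m Um" and "compatible m Um"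
  shows "AE hs in PiM UNIV (\<lambda>_::nat. measure_pmf (task_pmf V d K)).
           (\<forall>\<Phi>. admissible d m \<psi> \<Phi> \<longrightarrow> convergent (objective d m \<psi> Ud Um hs \<Phi>)) \<and>
           (\<forall>\<Phi>s. admissible d m \<psi> \<Phi>s \<and>
                 (\<forall>\<Phi>. admissible d m \<psi> \<Phi> \<longrightarrow>
                        lim (objective d m \<psi> Ud Um hs \<Phi>s) \<le> lim (objective d m \<psi> Ud Um hs \<Phi>))
              \<longrightarrow> (\<exists>\<pi> s. \<pi> permutes {..<d} \<and> (\<forall>j<d. s j \<in> {-1, 1::real}) \<and>
                        (\<forall>j<d. \<forall>z\<in>cube d. \<Phi>s (\<psi> z) j = s j * z (\<pi> j))))"
proof -
  note d1 = assms(1) and psi_inj = assms(4) and fV = assms(5) and V = assms(6)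
  note pp = assms(7) and psum = assms(8) and pK = assms(9) and btd = assms(10) and cpd = assms(11)
  have V1: "1 \<in> V" using V by auto
  let ?C = "cube d"
  define T where "T = task_pmf V d K"
  define Taus where "Taus = PiE ?C (\<lambda>_. ?C)"
  have finTaus: "finite Taus" unfolding Taus_def by (intro finite_PiE) auto
  define Yt where "Yt \<tau> h = real (deg d (compC d \<tau> h))" for \<tau> h
  define L where "L \<tau> = measure_pmf.expectation T (Yt \<tau>)" for \<tau>
  have sK: "set_pmf K \<subseteq> {1..d}" using setK[OF pK psum] .
  have dU: "deg_U d Ud f = deg d f" for f using deg_U_eq[OF btd cpd] .
  have AE1: "AE hs in PiM UNIV (\<lambda>_::nat. measure_pmf T).
               \<forall>\<tau>\<in>Taus. (\<lambda>n. (\<Sum>i<n. Yt \<tau> (hs i)) / real n) \<longlonglongrightarrow> L \<tau>"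
    unfolding L_def
  proof (rule AE_finite_allI[OF finTaus])
    fix \<tau> show "AE hs in PiM UNIV (\<lambda>_::nat. measure_pmf T).
                  (\<lambda>n. (\<Sum>i<n. Yt \<tau> (hs i)) / real n) \<longlonglongrightarrow> measure_pmf.expectation T (Yt \<tau>)"
    proof (rule slln_pmf[where a=0 and b="real d + 1"])
      show "Yt \<tau> x \<in> {0..real d + 1}" for x
        using deg_le_n[of d "compC d \<tau> x"] by (simp add: Yt_def)
    qed simp
  qed
  define tauOf where "tauOf \<Phi> = restrict (inv_into ?C (\<Phi> \<circ> \<psi>)) ?C" for \<Phi>
  have adm_bij: "bij_betw (\<Phi> \<circ> \<psi>) ?C ?C" if "admissible d m \<psi> \<Phi>" for \<Phi>
    using that by (simp add: admissible_def)
  have tau_in: "tauOf \<Phi> \<in> Taus" if "admissible d m \<psi> \<Phi>" for \<Phi>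
  proof -
    have "bij_betw (inv_into ?C (\<Phi> \<circ> \<psi>)) ?C ?C" using bij_betw_inv_into[OF adm_bij[OF that]] .
    then show ?thesis by (auto simp: tauOf_def Taus_def bij_betw_def)
  qed
  have compC_restr: "compC d (restrict \<tau> ?C) = compC d \<tau>" for \<tau>
    by (auto simp: compC_def fun_eq_iff)
  have obj_eq: "objective d m \<psi> Ud Um hs \<Phi> n =
        (\<Sum>i<n. Yt (tauOf \<Phi>) (hs i)) / real n + (\<Sum>j<d. real (deg_U m Um (coord m \<Phi> j))) / real n"
    if "admissible d m \<psi> \<Phi>" for hs \<Phi> n
  proof -
    have "g_of d \<psi> \<Phi> (hs i) = compC d (tauOf \<Phi>) (hs i)" for i
      using g_of_eq[OF adm_bij[OF that]] by (simp add: tauOf_def compC_restr)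
    then show ?thesis by (simp add: objective_def dU Yt_def add_divide_distrib)
  qed
  have key: "(\<forall>\<Phi>. admissible d m \<psi> \<Phi> \<longrightarrow> convergent (objective d m \<psi> Ud Um hs \<Phi>)) \<and>
           (\<forall>\<Phi>s. admissible d m \<psi> \<Phi>s \<and>
                 (\<forall>\<Phi>. admissible d m \<psi> \<Phi> \<longrightarrow>
                        lim (objective d m \<psi> Ud Um hs \<Phi>s) \<le> lim (objective d m \<psi> Ud Um hs \<Phi>))
              \<longrightarrow> (\<exists>\<pi> s. \<pi> permutes {..<d} \<and> (\<forall>j<d. s j \<in> {-1, 1::real}) \<and>
                        (\<forall>j<d. \<forall>z\<in>cube d. \<Phi>s (\<psi> z) j = s j * z (\<pi> j))))"
    if conv: "\<forall>\<tau>\<in>Taus. (\<lambda>n. (\<Sum>i<n. Yt \<tau> (hs i)) / real n) \<longlonglongrightarrow> L \<tau>" for hs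
  proof -
    have lim_obj: "objective d m \<psi> Ud Um hs \<Phi> \<longlonglongrightarrow> L (tauOf \<Phi>)" if adm: "admissible d m \<psi> \<Phi>" for \<Phi>
    proof -
      have "(\<lambda>n. (\<Sum>i<n. Yt (tauOf \<Phi>) (hs i)) / real n + (\<Sum>j<d. real (deg_U m Um (coord m \<Phi> j))) / real n)
              \<longlonglongrightarrow> L (tauOf \<Phi>) + 0"
        by (intro tendsto_add lim_const_over_n) (use conv tau_in[OF adm] in blast)
      moreover have "objective d m \<psi> Ud Um hs \<Phi> = (\<lambda>n. (\<Sum>i<n. Yt (tauOf \<Phi>) (hs i)) / real n + (\<Sum>j<d. real (deg_U m Um (coord m \<Phi> j))) / real n)"
        by (rule ext) (rule obj_eq[OF adm])
      ultimately show ?thesis by simp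
    qed
    have limL: "lim (objective d m \<psi> Ud Um hs \<Phi>) = L (tauOf \<Phi>)" if "admissible d m \<psi> \<Phi>" for \<Phi>
      using lim_obj[OF that] by (rule limI)
    show ?thesis
    proof (intro conjI allI impI)
      fix \<Phi> assume "admissible d m \<psi> \<Phi>"
      then show "convergent (objective d m \<psi> Ud Um hs \<Phi>)" using lim_obj convergentI by blast
    next
      fix \<Phi>s assume H: "admissible d m \<psi> \<Phi>s \<and> (\<forall>\<Phi>. admissible d m \<psi> \<Phi> \<longrightarrow>
                        lim (objective d m \<psi> Ud Um hs \<Phi>s) \<le> lim (objective d m \<psi> Ud Um hs \<Phi>))"
      define \<Phi>0 where "\<Phi>0 x = (if x \<in> \<psi> ` ?C then inv_into ?C \<psi> x else ones d)" for x
      have P0: "(\<Phi>0 \<circ> \<psi>) z = z" if "z \<in> ?C" for z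
        using that psi_inj by (simp add: \<Phi>0_def inv_into_f_f)
      have adm0: "admissible d m \<psi> \<Phi>0"
        unfolding admissible_def
      proof
        show "\<Phi>0 ` cube m \<subseteq> ?C" by (auto simp: \<Phi>0_def ones_cube inv_into_into)
        show "bij_betw (\<Phi>0 \<circ> \<psi>) ?C ?C"
          by (rule bij_betw_cong[THEN iffD2, OF _ bij_betw_id]) (use P0 in auto)
      qed
      have t0: "compC d (tauOf \<Phi>0) h = h" if "h \<in> fspace d" for h
      proof
        fix w show "compC d (tauOf \<Phi>0) h w = h w"
        proof (cases "w \<in> ?C")
          case True
          have inj0: "inj_on (\<Phi>0 \<circ> \<psi>) ?C" using adm_bij[OF adm0] by (simp add: bij_betw_def)
          have "inv_into ?C (\<Phi>0 \<circ> \<psi>) ((\<Phi>0 \<circ> \<psi>) w) = w" using inv_into_f_f[OF inj0 True] .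
          then have "inv_into ?C (\<Phi>0 \<circ> \<psi>) w = w" using P0[OF True] by simp
          then show ?thesis using True by (simp add: compC_def tauOf_def)
        next
          case False then show ?thesis using that by (simp add: compC_def fspace_def)
        qed
      qed
      have admS: "admissible d m \<psi> \<Phi>s" using H by blast
      let ?\<sigma> = "\<Phi>s \<circ> \<psi>"
      have bijS: "bij_betw ?\<sigma> ?C ?C" using adm_bij[OF admS] .
      have tauS: "tauOf \<Phi>s ` ?C = ?C" using tau_in[OF admS] 
        using bij_betw_inv_into[OF bijS] by (auto simp: tauOf_def bij_betw_def)
      have "L (tauOf \<Phi>s) \<le> L (tauOf \<Phi>0)" using H adm0 limL admS by metis
      moreover have "L \<tau> = (\<Sum>k\<in>{1..d}. p k * ((\<Sum>h\<in>Fk V d k. real (deg d (compC d \<tau> h))) / real (card (Fk V d k))))" for \<tau>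
        unfolding L_def T_def Yt_def expect_T[OF sK fV V1] using pK by (intro sum.cong) auto
      moreover have "(\<Sum>h\<in>Fk V d k. real (deg d (compC d (tauOf \<Phi>0) h))) = (\<Sum>h\<in>Fk V d k. real (deg d h))" for k
        by (rule sum.cong) (auto simp: t0 Fk_def)
      ultimately have le: "(\<Sum>k\<in>{1..d}. p k * ((\<Sum>h\<in>Fk V d k. real (deg d (compC d (tauOf \<Phi>s) h))) / real (card (Fk V d k))))
             \<le> (\<Sum>k\<in>{1..d}. p k * ((\<Sum>h\<in>Fk V d k. real (deg d h)) / real (card (Fk V d k))))" by simp
      have sub0: "compC d (tauOf \<Phi>s) ` Fk V d 1 \<subseteq> Fk V d 1"
        by (rule min_implies_sub[OF d1 _ fV V1 tauS le]) (use pp in auto)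
      have sub: "compC d (inv_into ?C ?\<sigma>) ` Fk V d 1 \<subseteq> Fk V d 1"
        using sub0 by (simp add: tauOf_def compC_restr)
      obtain \<pi> s where r: "\<pi> permutes {..<d}" "\<forall>j<d. s j \<in> {-1, 1::real}"
        "\<forall>j<d. \<forall>z\<in>?C. ?\<sigma> z j = s j * z (\<pi> j)"
        using perm_extract[OF bijS sub V] by blast
      then show "\<exists>\<pi> s. \<pi> permutes {..<d} \<and> (\<forall>j<d. s j \<in> {-1, 1::real}) \<and>
                        (\<forall>j<d. \<forall>z\<in>cube d. \<Phi>s (\<psi> z) j = s j * z (\<pi> j))" by auto
    qed
  qed
  show ?thesis
    using AE1 unfolding T_def[symmetric] by (rule eventually_mono) (rule key)
qed


end
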